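(* Let $d\ge2$ and $n\ge2$ be integers and $R\ge1$. There exists an $(R+1)$-fat cake $C\subseteq\mathbb{R}^d$ such that for every real $m'$ with $1\le m'\le (n-1)^{1/d}$, letting $S_{m'}$ be the family of $m'R$-fat Borel subsets of $\mathbb{R}^d$, $$\mathrm{PropEF}(C,n,S_{m'})\le\mathrm{Prop}(C,n,S_{m'})<\frac1n.$$
   Context: For $R\ge1$, a $d$-dimensional piece (Borel subset of $\mathbb{R}^d$) is $R$-fat if it contains a $d$-dimensional cube $B^-$ and is contained in a $d$-dimensional cube $B^+$ parallel to $B^-$ with $\mathrm{len}(B^+)/\mathrm{len}(B^-)\le R$ (len = side length). A value measure on $C$ is $V(X)=\int_X v$ with $v$ non-negative, bounded, integrable on $C$, $V(C)<\infty$; $V^S(X):=\sup\{V(s):s\in S,s\subseteq X\}$. For $n$ agents with value measures $V_1,\dots,V_n$, an $S$-allocation is $(X_1,\dots,X_n)$ with $X_i\in S$ pairwise disjoint and $\bigcup_i X_i\subseteq C$; it is envy-free if $V_i^S(X_i)\ge V_i^S(X_j)$ for all $i,j$. $\mathrm{Prop}(C,n,S):=\inf_{V_1,\dots,V_n}\sup_X\min_i V_i(X_i)/V_i(C)$, the infimum over all $n$-tuples of value measures on $C$ and the supremum over all $S$-allocations; $\mathrm{PropEF}(C,n,S)$ is the same with the supremum over envy-free $S$-allocations only. *)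

theory Defs
  imports "HOL-Analysis.Analysis"
begin

definition cube :: "((real^'d) \<Rightarrow> (real^'d)) \<Rightarrow> real^'d \<Rightarrow> real \<Rightarrow> (real^'d) set" where
  "cube Q a l = (\<lambda>x. a + Q x) ` cbox 0 (l *\<^sub>R One)"

definition fat :: "real \<Rightarrow> (real^'d) set \<Rightarrow> bool" where
  "fat R X \<longleftrightarrow> (\<exists>Q a l b L. orthogonal_transformation Q \<and> 0 < l \<and> 0 < L \<and>
      cube Q a l \<subseteq> X \<and> X \<subseteq> cube Q b L \<and> L / l \<le> R)"

definition fat_pieces :: "real \<Rightarrow> (real^'d) set set" where
  "fat_pieces R = {X. X \<in> sets borel \<and> fat R X}"

definition value_density :: "(real^'d) set \<Rightarrow> ((real^'d) \<Rightarrow> real) \<Rightarrow> bool" where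
  "value_density C v \<longleftrightarrow> (\<forall>x\<in>C. 0 \<le> v x) \<and> (\<exists>B. \<forall>x\<in>C. v x \<le> B) \<and>
      set_integrable lebesgue C v \<and> 0 < (LINT x:C|lebesgue. v x)"

definition valm :: "((real^'d) \<Rightarrow> real) \<Rightarrow> (real^'d) set \<Rightarrow> real" where
  "valm v X = (LINT x:X|lebesgue. v x)"

definition valS :: "(real^'d) set set \<Rightarrow> ((real^'d) \<Rightarrow> real) \<Rightarrow> (real^'d) set \<Rightarrow> ereal" where
  "valS S v X = Sup {ereal (valm v s) | s. s \<in> S \<and> s \<subseteq> X}"

definition allocation :: "(real^'d) set \<Rightarrow> nat \<Rightarrow> (real^'d) set set \<Rightarrow> (nat \<Rightarrow> (real^'d) set) \<Rightarrow> bool" where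
  "allocation C n S X \<longleftrightarrow> (\<forall>i<n. X i \<in> S) \<and> (\<forall>i<n. \<forall>j<n. i \<noteq> j \<longrightarrow> X i \<inter> X j = {}) \<and>
      (\<Union>i<n. X i) \<subseteq> C"

definition envy_free :: "nat \<Rightarrow> (real^'d) set set \<Rightarrow> (nat \<Rightarrow> (real^'d) \<Rightarrow> real) \<Rightarrow> (nat \<Rightarrow> (real^'d) set) \<Rightarrow> bool" where
  "envy_free n S v X \<longleftrightarrow> (\<forall>i<n. \<forall>j<n. valS S (v i) (X j) \<le> valS S (v i) (X i))"

definition prop_ratio :: "(real^'d) set \<Rightarrow> nat \<Rightarrow> (nat \<Rightarrow> (real^'d) \<Rightarrow> real) \<Rightarrow> (nat \<Rightarrow> (real^'d) set) \<Rightarrow> real" where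
  "prop_ratio C n v X = Min ((\<lambda>i. valm (v i) (X i) / valm (v i) C) ` {..<n})"

definition Prop :: "(real^'d) set \<Rightarrow> nat \<Rightarrow> (real^'d) set set \<Rightarrow> ereal" where
  "Prop C n S = Inf {Sup {ereal (prop_ratio C n v X) | X. allocation C n S X}
                     | v. \<forall>i<n. value_density C (v i)}"

definition PropEF :: "(real^'d) set \<Rightarrow> nat \<Rightarrow> (real^'d) set set \<Rightarrow> ereal" where
  "PropEF C n S = Inf {Sup {ereal (prop_ratio C n v X) | X. allocation C n S X \<and> envy_free n S v X}
                     | v. \<forall>i<n. value_density C (v i)}"

end

theory Submission imports Defs begin


typedef 'a wo = "UNIV :: 'a set" by auto

instance wo :: (finite) finite
proof
  have "UNIV = Abs_wo ` UNIV" using type_definition.univ[OF type_definition_wo] by simp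
  then show "finite (UNIV :: 'a wo set)" by (metis finite finite_imageI)
qed

instantiation wo :: (finite) linorder
begin
definition less_eq_wo :: "'a wo \<Rightarrow> 'a wo \<Rightarrow> bool" where
  "less_eq_wo x y \<longleftrightarrow> to_nat (Rep_wo x) \<le> to_nat (Rep_wo y)"
definition less_wo :: "'a wo \<Rightarrow> 'a wo \<Rightarrow> bool" where
  "less_wo x y \<longleftrightarrow> to_nat (Rep_wo x) < to_nat (Rep_wo y)"
instance
proof
  fix x y z :: "'a wo"
  show "(x < y) = (x \<le> y \<and> \<not> y \<le> x)" by (auto simp: less_eq_wo_def less_wo_def)
  show "x \<le> x" by (simp add: less_eq_wo_def)
  show "x \<le> y \<Longrightarrow> y \<le> z \<Longrightarrow> x \<le> z" by (simp add: less_eq_wo_def)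
  show "x \<le> y \<Longrightarrow> y \<le> x \<Longrightarrow> x = y"
    by (simp add: less_eq_wo_def Rep_wo_inject)
  show "x \<le> y \<or> y \<le> x" by (auto simp: less_eq_wo_def)
qed
end

instance wo :: (finite) wellorder
proof
  fix P :: "'a wo \<Rightarrow> bool" and a
  assume H: "\<And>x. (\<And>y. y < x \<Longrightarrow> P y) \<Longrightarrow> P x"
  have "\<And>k. \<forall>x. to_nat (Rep_wo x) = k \<longrightarrow> P x"
  proof -
    fix k show "\<forall>x. to_nat (Rep_wo x) = k \<longrightarrow> P x"
    proof (induction k rule: less_induct)
      case (less k) then show ?case using H by (auto simp: less_wo_def)
    qed
  qed
  then show "P a" by blast
qed



definition phi :: "real^'d \<Rightarrow> real^('d wo)" where "phi x = (\<chi> j. x $ Rep_wo j)"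
definition psi :: "real^('d wo) \<Rightarrow> real^'d" where "psi y = (\<chi> i. y $ Abs_wo i)"

lemma psi_phi[simp]: "psi (phi x) = x" by (simp add: phi_def psi_def Abs_wo_inverse vec_eq_iff)
lemma phi_psi[simp]: "phi (psi y) = y" by (simp add: phi_def psi_def Rep_wo_inverse vec_eq_iff)

lemma linear_phi: "linear phi" by (auto simp: linear_iff phi_def vec_eq_iff)
lemma linear_psi: "linear psi" by (auto simp: linear_iff psi_def vec_eq_iff)

lemma bij_Rep_wo: "bij Rep_wo"
  unfolding bij_def inj_def using type_definition.Rep_range[OF type_definition_wo]
  by (auto simp: Rep_wo_inject)

lemma norm_phi: "norm (phi x) = norm x"
proof -
  have "(\<Sum>j\<in>UNIV. (x $ Rep_wo j)\<^sup>2) = (\<Sum>i\<in>UNIV. (x $ i)\<^sup>2)"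
    using sum.reindex_bij_betw[OF bij_Rep_wo, of "\<lambda>i. (x$i)^2"] by simp
  then show ?thesis by (simp add: norm_vec_def L2_set_def phi_def)
qed

lemma norm_psi: "norm (psi y) = norm y" by (metis norm_phi phi_psi)

lemma phi_cbox: "phi ` cbox u v = cbox (phi u) (phi v)"
proof
  show "phi ` cbox u v \<subseteq> cbox (phi u) (phi v)"
    by (auto simp: mem_box_cart phi_def)
  show "cbox (phi u) (phi v) \<subseteq> phi ` cbox u v"
  proof
    fix y assume y: "y \<in> cbox (phi u) (phi v)"
    have "psi y \<in> cbox u v" using y unfolding mem_box_cart
      by (metis Abs_wo_inverse UNIV_I phi_def psi_def vec_lambda_beta)
    then show "y \<in> phi ` cbox u v" by (metis image_eqI phi_psi)
  qed
qed

lemma psi_cbox: "psi ` cbox u v = cbox (psi u) (psi v)"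
proof -
  have "cbox u v = phi ` cbox (psi u) (psi v)" by (simp add: phi_cbox)
  then show ?thesis by (simp add: image_image)
qed

lemma content_phi: "Henstock_Kurzweil_Integration.content (phi ` cbox u v) = Henstock_Kurzweil_Integration.content (cbox u v)"
proof -
  have e: "cbox (phi u) (phi v) = {} \<longleftrightarrow> cbox u v = {}" by (metis image_is_empty phi_cbox)
  have "(\<Prod>j\<in>UNIV. v $ Rep_wo j - u $ Rep_wo j) = (\<Prod>i\<in>UNIV. v $ i - u $ i)"
    using prod.reindex_bij_betw[OF bij_Rep_wo, of "\<lambda>i. v$i - u$i"] by simp
  then show ?thesis unfolding phi_cbox content_cbox_if_cart e by (simp add: phi_def)
qed



lemma transfer_measure:
  fixes S :: "(real^('d::finite wo)) set"
  assumes S: "S \<in> lmeasurable" and b: "bounded S"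
  shows "psi ` S \<in> lmeasurable \<and> measure lebesgue (psi ` S) = measure lebesgue S"
proof -
  obtain a b where sub: "S \<subseteq> cbox a b" using b bounded_subset_cbox_symmetric by metis
  have "(indicator S has_integral measure lebesgue S) UNIV" using S lmeasurable_iff_has_integral by blast
  then have i1: "(indicator S has_integral measure lebesgue S) (cbox a b)"
  proof -
    have "(\<lambda>x. if x \<in> cbox a b then indicator S x else 0) = (indicator S :: _ \<Rightarrow> real)"
      using sub by (auto simp: indicator_def fun_eq_iff)
    then show ?thesis
      by (subst has_integral_restrict_UNIV[symmetric]) (simp only: \<open>(indicator S has_integral measure lebesgue S) UNIV\<close>)
  qed
  have cg: "\<And>x. continuous (at x) phi" using linear_phi linear_continuous_at linear_conv_bounded_linear by blast
  have g: "\<And>u v. \<exists>w z. phi ` cbox u v = cbox w z" using phi_cbox by blast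
  have h: "\<And>u v. \<exists>w z. psi ` cbox u v = cbox w z" using psi_cbox by blast
  have r: "\<And>u v. Henstock_Kurzweil_Integration.content (phi ` cbox u v) = 1 * Henstock_Kurzweil_Integration.content (cbox u v)"
    using content_phi by simp
  from has_integral_twiddle[where r=1 and g=phi and h=psi, OF _ psi_phi phi_psi cg g h r i1]
  have I: "((\<lambda>x. indicator S (phi x)) has_integral measure lebesgue S) (cbox (psi a) (psi b))"
    by (simp add: psi_cbox)
  have ind: "(\<lambda>x. indicator S (phi x)) = (indicator (psi ` S) :: real^'d \<Rightarrow> real)"
  proof
    fix x :: "real^'d"
    have "phi x \<in> S \<longleftrightarrow> x \<in> psi ` S" by (metis image_iff phi_psi psi_phi)
    then show "indicator S (phi x) = (indicator (psi ` S) x :: real)" by (simp add: indicator_def)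
  qed
  have sub2: "psi ` S \<subseteq> cbox (psi a) (psi b)" using sub psi_cbox by blast
  have "(indicator (psi ` S) has_integral measure lebesgue S) UNIV"
  proof -
    have "(\<lambda>x. if x \<in> cbox (psi a) (psi b) then indicator (psi ` S) x else 0) = (indicator (psi ` S) :: _ \<Rightarrow> real)"
      using sub2 by (auto simp: indicator_def fun_eq_iff)
    have I': "(indicator (psi ` S) has_integral measure lebesgue S) (cbox (psi a) (psi b))"
      using I unfolding ind .
    then show ?thesis using \<open>(\<lambda>x. if x \<in> cbox (psi a) (psi b) then indicator (psi ` S) x else 0) = _\<close>
      by (subst (asm) has_integral_restrict_UNIV[symmetric]) simp
  qed
  then show ?thesis
    using lmeasurable_iff_indicator_has_integral[of "psi ` S" "measure lebesgue S"] by simp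
qed



lemma one_cart: "(One::real^'n::finite) $ i = 1" by (metis Cart_1 one_index)

lemma oneR: "((c::real) *\<^sub>R (One::real^'n::finite)) $ i = c"
  by (simp only: vector_scaleR_component one_cart) simp

lemma sum_Basis_cart[simp]: "(\<Sum>x\<in>(Basis::(real^'n::finite) set). x $ i) = 1"
  using one_cart[of i] by simp

lemma ml_cbox: "measure lebesgue (cbox a b) = Henstock_Kurzweil_Integration.content (cbox a b)"
  by simp



lemma cbox_const_measure:
  assumes "s \<le> t"
  shows "measure lebesgue (cbox (s *\<^sub>R (One :: real^'n::finite)) (t *\<^sub>R One)) = (t - s) ^ CARD('n)"
proof -
  have ne: "cbox (s *\<^sub>R (One :: real^'n)) (t *\<^sub>R One) \<noteq> {}" using assms
    by (auto simp: box_ne_empty(1) inner_Basis)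
  have "(\<Prod>i\<in>UNIV. (t *\<^sub>R (One :: real^'n)) $ i - (s *\<^sub>R (One::real^'n)) $ i) = (\<Prod>i\<in>(UNIV::'n set). t - s)"
    by (rule prod.cong) (auto simp only: oneR)
  also have "\<dots> = (t - s) ^ CARD('n)" by simp
  finally show ?thesis using content_cbox_cart[OF ne] by (simp only: ml_cbox)
qed

lemma borel_lebesgue: "X \<in> sets borel \<Longrightarrow> X \<in> sets lebesgue"
  using sets_completionI_sets[of X lborel] by simp

lemma cube_measure:
  fixes Q :: "real^'d::finite \<Rightarrow> real^'d"
  assumes Q: "orthogonal_transformation Q" and l: "0 \<le> l"
  shows "cube Q a l \<in> lmeasurable \<and> measure lebesgue (cube Q a l) = l ^ CARD('d)"
proof -
  define B where "B = cbox 0 (l *\<^sub>R (One :: real^'d))"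
  define Q' where "Q' = phi \<circ> Q \<circ> psi"
  have oQ': "orthogonal_transformation Q'"
    unfolding orthogonal_transformation Q'_def
  proof
    show "linear (phi \<circ> Q \<circ> psi)" using Q linear_phi linear_psi
      by (auto intro!: linear_compose simp: orthogonal_transformation_linear)
    show "\<forall>v. norm ((phi \<circ> Q \<circ> psi) v) = norm v"
      by (simp add: norm_phi norm_psi orthogonal_transformation_norm[OF Q])
  qed
  have pB: "phi ` B \<in> lmeasurable" "bounded (phi ` B)" "measure lebesgue (phi ` B) = measure lebesgue B"
    unfolding B_def phi_cbox using content_phi[of 0 "l *\<^sub>R One"] by (auto simp: phi_cbox)
  have m1: "Q' ` phi ` B \<in> lmeasurable" "measure lebesgue (Q' ` phi ` B) = measure lebesgue (phi ` B)"
    using measurable_orthogonal_image[OF oQ' pB(1)] measure_orthogonal_image[OF oQ' pB(1)] by auto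
  have bd: "bounded (Q' ` phi ` B)"
    using pB(2) oQ' bounded_linear_image linear_conv_bounded_linear orthogonal_transformation_linear by blast
  have eq: "psi ` Q' ` phi ` B = Q ` B" by (simp add: Q'_def image_image)
  have m2: "Q ` B \<in> lmeasurable" "measure lebesgue (Q ` B) = l ^ CARD('d)"
  proof -
    have t: "psi ` Q' ` phi ` B \<in> lmeasurable" "measure lebesgue (psi ` Q' ` phi ` B) = measure lebesgue (Q' ` phi ` B)"
      using transfer_measure[OF m1(1) bd] by auto
    show "Q ` B \<in> lmeasurable" using t(1) eq by simp
    have "measure lebesgue B = l ^ CARD('d)" unfolding B_def using cbox_const_measure[of 0 l] l by simp
    then show "measure lebesgue (Q ` B) = l ^ CARD('d)" using t(2) eq m1(2) pB(3) by simp
  qed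
  have ceq: "cube Q a l = (+) a ` (Q ` B)" by (simp add: cube_def B_def image_image)
  show ?thesis unfolding ceq using m2 measurable_translation[of "Q ` B" a] measure_translation[of a "Q ` B"] by simp
qed



lemma norm_One_pos: "0 < norm (One::real^'n::finite)"
proof -
  have "(One::real^'n) $ undefined = 1" by (rule one_cart)
  then have "(One::real^'n) \<noteq> 0" by (metis zero_index zero_neq_one)
  then show ?thesis by simp
qed

lemma geo:
  fixes X :: "(real^'d::finite) set"
  assumes f: "fat M X" and M: "0 < M" and xy: "x \<in> X" "y \<in> X"
    and xK: "\<forall>i. 0 \<le> x$i \<and> x$i \<le> 1" and yP: "\<forall>i. R + 1 - e \<le> y$i" and e: "e \<le> R"
  shows "\<exists>D \<subseteq> X. D \<in> lmeasurable \<and> ((R - e) / M) ^ CARD('d) \<le> measure lebesgue D"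
proof -
  obtain Q a l b L where Q: "orthogonal_transformation Q" and l: "0 < l" and L: "0 < L"
    and inner: "cube Q a l \<subseteq> X" and outer: "X \<subseteq> cube Q b L" and r: "L / l \<le> M"
    using f unfolding fat_def by blast
  obtain u where u: "u \<in> cbox 0 (L *\<^sub>R One)" "x = b + Q u" using outer xy(1) unfolding cube_def by blast
  obtain w where w: "w \<in> cbox 0 (L *\<^sub>R One)" "y = b + Q w" using outer xy(2) unfolding cube_def by blast
  have "y - x = Q (w - u)" using u w Q by (simp add: orthogonal_transformation_linear linear_diff)
  then have nxy: "norm (y - x) = norm (w - u)" using Q by (simp add: orthogonal_transformation_norm)
  have "norm (w - u) \<le> norm (L *\<^sub>R (One::real^'d))"
  proof (rule norm_le_componentwise_cart)
    fix i
    have "0 \<le> u$i" "u$i \<le> L" "0 \<le> w$i" "w$i \<le> L" using u(1) w(1) by (auto simp: mem_box_cart oneR)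
    then show "norm ((w - u) $ i) \<le> norm ((L *\<^sub>R (One::real^'d)) $ i)" by (simp add: oneR)
  qed
  moreover have "norm ((R - e) *\<^sub>R (One::real^'d)) \<le> norm (y - x)"
  proof (rule norm_le_componentwise_cart)
    fix i
    have "x$i \<le> 1" "R + 1 - e \<le> y$i" using xK yP by auto
    then show "norm (((R - e) *\<^sub>R (One::real^'d)) $ i) \<le> norm ((y - x) $ i)" using e by (simp add: oneR)
  qed
  moreover have n1: "norm (L *\<^sub>R (One::real^'d)) = L * norm (One::real^'d)" using L by simp
  moreover have n2: "norm ((R - e) *\<^sub>R (One::real^'d)) = (R - e) * norm (One::real^'d)" using e by simp
  ultimately have "(R - e) * norm (One::real^'d) \<le> L * norm (One::real^'d)"
    using nxy by linarith
  then have RL: "R - e \<le> L" using norm_One_pos by (metis mult_right_le_imp_le)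
  have "L \<le> M * l" using r l by (simp add: divide_le_eq)
  then have "(R - e) / M \<le> l" using RL M by (simp add: divide_le_eq mult.commute)
  then have "((R - e) / M) ^ CARD('d) \<le> l ^ CARD('d)" using e M by (intro power_mono) auto
  then show ?thesis using inner cube_measure[OF Q, of l a] l by (intro exI[of _ "cube Q a l"]) auto
qed

lemma avg:
  fixes f :: "nat \<Rightarrow> real"
  assumes "finite I" "I \<noteq> {}" "sum f I \<le> S"
  shows "\<exists>i\<in>I. f i \<le> S / card I"
proof (rule ccontr)
  assume "\<not> ?thesis"
  then have "\<forall>i\<in>I. S / card I < f i" by auto
  then have "(\<Sum>i\<in>I. S / card I) < sum f I" using assms by (intro sum_strict_mono) auto
  then show False using assms by simp
qed



lemma key:
  fixes X :: "nat \<Rightarrow> (real^'d::finite) set"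
  assumes n2: "n \<ge> 2" and alloc: "allocation (K \<union> P) n (fat_pieces M) X"
   and Kdef: "K = cbox (0 *\<^sub>R One) (1 *\<^sub>R One)" and Pdef: "P = cbox ((R+1-e) *\<^sub>R One) ((R+1) *\<^sub>R One)"
   and e: "0 < e" "e < R" and M: "0 < M" and Mb: "c0 \<le> ((R - e)/M)^CARD('d)"
  shows "\<exists>i<n. measure lebesgue (X i) \<le> max (e^CARD('d)) (max ((1 + e^CARD('d) - c0)/(real n - 1)) (1/real n))"
proof -
  let ?T = "1 + e^CARD('d)"
  have memK: "x \<in> K \<longleftrightarrow> (\<forall>i. 0 \<le> x$i \<and> x$i \<le> 1)" for x
    unfolding Kdef mem_box_cart oneR by simp
  have memP: "x \<in> P \<longleftrightarrow> (\<forall>i. R+1-e \<le> x$i \<and> x$i \<le> R+1)" for x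
    unfolding Pdef mem_box_cart oneR by simp
  have disj: "K \<inter> P = {}"
  proof (rule ccontr)
    assume "K \<inter> P \<noteq> {}"
    then obtain x where "x \<in> K" "x \<in> P" by blast
    then have "x $ undefined \<le> 1" "R+1-e \<le> x $ undefined" using memK memP by auto
    then show False using e by simp
  qed
  have "measure lebesgue K = (1 - 0)^CARD('d)" unfolding Kdef by (rule cbox_const_measure) simp
  then have mK: "measure lebesgue K = 1" by simp
  have "measure lebesgue P = (R + 1 - (R+1-e))^CARD('d)" unfolding Pdef by (rule cbox_const_measure) (use e in simp)
  then have mP: "measure lebesgue P = e^CARD('d)" by simp
  have KL: "K \<in> lmeasurable" "P \<in> lmeasurable" unfolding Kdef Pdef by auto
  have CL: "K \<union> P \<in> lmeasurable"
    using KL by (intro bounded_set_imp_lmeasurable) (auto simp: Kdef Pdef)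
  have mC: "measure lebesgue (K \<union> P) = ?T"
  proof -
    have "emeasure lebesgue K \<noteq> \<infinity>" "emeasure lebesgue P \<noteq> \<infinity>" using KL by (auto simp: fmeasurable_def)
    then show ?thesis using measure_Union[of lebesgue K P] KL disj mK mP by (auto dest: fmeasurableD)
  qed
  have Xs: "\<And>i. i < n \<Longrightarrow> X i \<subseteq> K \<union> P" using alloc unfolding allocation_def by blast
  have Xf: "\<And>i. i < n \<Longrightarrow> fat M (X i)" using alloc unfolding allocation_def fat_pieces_def by blast
  have XL: "\<And>i. i < n \<Longrightarrow> X i \<in> lmeasurable"
  proof -
    fix i assume "i < n"
    then have "X i \<in> sets borel" using alloc unfolding allocation_def fat_pieces_def by blast
    then show "X i \<in> lmeasurable" using fmeasurableI2[OF CL Xs[OF \<open>i<n\<close>]] borel_lebesgue by blast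
  qed
  have dj: "disjoint_family_on X {..<n}"
    using alloc unfolding allocation_def disjoint_family_on_def by blast
  have sumeq: "(\<Sum>i<n. measure lebesgue (X i)) = measure lebesgue (\<Union>i<n. X i)"
  proof -
    have "\<And>i. i \<in> {..<n} \<Longrightarrow> emeasure lebesgue (X i) \<noteq> \<infinity>"
      unfolding infinity_ennreal_def using XL fmeasurableD2 lessThan_iff by blast
    moreover have "X ` {..<n} \<subseteq> sets lebesgue" using XL by auto
    ultimately show ?thesis using measure_finite_Union[of "{..<n}" X lebesgue] dj by simp
  qed
  have UL: "(\<Union>i<n. X i) \<in> sets lebesgue" using XL by blast
  have sumT: "(\<Sum>i<n. measure lebesgue (X i)) \<le> ?T"
    unfolding sumeq mC[symmetric] using Xs UL CL by (intro measure_mono_fmeasurable) auto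
  show ?thesis
  proof (cases "\<exists>i<n. X i \<subseteq> P")
    case True
    then obtain i where i: "i < n" "X i \<subseteq> P" by blast
    then have "measure lebesgue (X i) \<le> e^CARD('d)"
      using mP measure_mono_fmeasurable[OF i(2)] KL XL by (metis fmeasurableD)
    then show ?thesis using i by (intro exI[of _ i]) auto
  next
    case notA: False
    show ?thesis
    proof (cases "\<exists>j<n. X j \<inter> K \<noteq> {} \<and> X j \<inter> P \<noteq> {}")
      case True
      then obtain j x y where j: "j < n" "x \<in> X j" "x \<in> K" "y \<in> X j" "y \<in> P" by blast
      obtain D where D: "D \<subseteq> X j" "D \<in> lmeasurable" "((R - e) / M) ^ CARD('d) \<le> measure lebesgue D"
        using geo[OF Xf[OF j(1)] M j(2) j(4), of R e] memK memP j e by auto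
      have "measure lebesgue D \<le> measure lebesgue (X j)"
        using measure_mono_fmeasurable[OF D(1)] D(2) XL[OF j(1)] by blast
      then have c0j: "c0 \<le> measure lebesgue (X j)" using Mb D(3) by linarith
      have "(\<Sum>i<n. measure lebesgue (X i)) = measure lebesgue (X j) + (\<Sum>i\<in>{..<n} - {j}. measure lebesgue (X i))"
        using j(1) by (simp add: sum.remove)
      then have s2: "(\<Sum>i\<in>{..<n} - {j}. measure lebesgue (X i)) \<le> ?T - c0" using sumT c0j by linarith
      have cI: "card ({..<n} - {j}) = n - 1" using j(1) by simp
      have neI: "{..<n} - {j} \<noteq> {}"
      proof -
        have "card ({..<n} - {j}) \<noteq> 0" using cI n2 by simp
        then show ?thesis by (metis card.empty)
      qed
      obtain i where i: "i \<in> {..<n} - {j}" "measure lebesgue (X i) \<le> (?T - c0) / real (card ({..<n} - {j}))"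
        using avg[OF _ neI s2] by auto
      have "real (card ({..<n} - {j})) = real n - 1" using cI n2 by simp
      then show ?thesis using i by (intro exI[of _ i]) auto
    next
      case False
      have sK: "X i \<subseteq> K" if "i < n" for i
      proof
        fix x assume x: "x \<in> X i"
        show "x \<in> K"
        proof (rule ccontr)
          assume "x \<notin> K"
          then have "x \<in> P" using x Xs[OF that] by blast
          then have "X i \<inter> K = {}" using False that x by blast
          then have "X i \<subseteq> P" using Xs[OF that] by blast
          then show False using notA that by blast
        qed
      qed
      have "(\<Sum>i<n. measure lebesgue (X i)) \<le> 1"
        unfolding sumeq mK[symmetric] using sK UL KL by (intro measure_mono_fmeasurable) auto
      then obtain i where i: "i \<in> {..<n}" "measure lebesgue (X i) \<le> 1 / real (card {..<n})"
        using avg[of "{..<n}" _ 1] n2 by fastforce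
      then show ?thesis by (intro exI[of _ i]) auto
    qed
  qed
qed



lemma propEF_le: "PropEF C n S \<le> Prop C n S"
  unfolding PropEF_def Prop_def
proof (rule Inf_mono)
  fix b assume "b \<in> {Sup {ereal (prop_ratio C n v X) | X. allocation C n S X} | v. \<forall>i<n. value_density C (v i)}"
  then obtain v where v: "\<forall>i<n. value_density C (v i)" and b: "b = Sup {ereal (prop_ratio C n v X) | X. allocation C n S X}" by blast
  show "\<exists>a\<in>{Sup {ereal (prop_ratio C n v X) | X. allocation C n S X \<and> envy_free n S v X} | v. \<forall>i<n. value_density C (v i)}. a \<le> b"
    using v unfolding b by (intro bexI[of _ "Sup {ereal (prop_ratio C n v X) | X. allocation C n S X \<and> envy_free n S v X}"] Sup_subset_mono) auto
qed

lemma valm_one: "X \<in> lmeasurable \<Longrightarrow> valm (\<lambda>x. 1) X = measure lebesgue X"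
proof -
  assume X: "X \<in> lmeasurable"
  have "emeasure lebesgue X \<noteq> \<infinity>" unfolding infinity_ennreal_def using X fmeasurableD2 by blast
  then show ?thesis unfolding valm_def using set_integral_const[of X lebesgue "1::real"] X by auto
qed



lemma mpart:
  fixes n d :: nat and R e m :: real
  assumes nR: "real n \<ge> 2" and dR: "real d \<ge> 2" and R: "R \<ge> 1" and e0: "0 < e" and eR: "e < R" and de: "real d * e < 1"
  and m1: "1 \<le> m" and mb: "m \<le> (real n - 1) powr (1 / real d)"
  shows "(1 - real d * e) / (real n - 1) \<le> ((R - e) / (m * R)) ^ d"
proof -
  have "m ^ d \<le> ((real n - 1) powr (1 / real d)) ^ d" using m1 mb by (intro power_mono) auto
  also have "\<dots> = real n - 1"
  proof -
    have x0: "0 < real n - 1" using nR by simp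
    have "((real n - 1) powr (1 / real d)) ^ d = ((real n - 1) powr (1 / real d)) powr (real d)"
      using x0 by (simp add: powr_realpow)
    also have "\<dots> = (real n - 1) powr (1 / real d * real d)" by (simp add: powr_powr)
    also have "\<dots> = real n - 1" using dR x0 by simp
    finally show ?thesis .
  qed
  finally have md: "m ^ d \<le> real n - 1" .
  have md0: "0 < m ^ d" using m1 by simp
  have "1 + real d * (- (e / R)) \<le> (1 + (- (e / R))) ^ d"
    using eR e0 R by (intro Bernoulli_inequality) (simp add: field_simps)
  moreover have "real d * (e / R) \<le> real d * e" using e0 R dR by (simp add: divide_le_eq mult_left_mono)
  ultimately have Bn: "1 - real d * e \<le> (1 - e / R) ^ d" by simp
  have "(1 - real d * e) / (real n - 1) \<le> (1 - real d * e) / m ^ d"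
    using md md0 de by (intro divide_left_mono) auto
  also have "\<dots> \<le> (1 - e / R) ^ d / m ^ d" using Bn md0 by (simp add: divide_right_mono)
  also have "\<dots> = ((R - e) / (m * R)) ^ d"
  proof -
    have "(R - e) / (m * R) = (1 - e / R) / m" using R m1 by (simp add: field_simps)
    then show ?thesis by (simp add: power_divide)
  qed
  finally show ?thesis .
qed

lemma numerics:
  fixes n d :: nat and R e :: real
  assumes n2: "n \<ge> 2" and d2: "d \<ge> 2" and R: "R \<ge> 1"
    and e_def: "e = 1 / (2 * real n * (real d + 1))"
  shows "0 < e" "e < R"
    "max (e^d) (max ((1 + e^d - (1 - real d * e) / (real n - 1)) / (real n - 1)) (1 / real n)) < (1 + e^d) / real n"
    "\<And>m. 1 \<le> m \<Longrightarrow> m \<le> (real n - 1) powr (1 / real d) \<Longrightarrow>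
        (1 - real d * e) / (real n - 1) \<le> ((R - e) / (m * R)) ^ d"
proof -
  have nR: "real n \<ge> 2" using n2 by simp
  have dR: "real d \<ge> 2" using d2 by simp
  have pos: "0 < 2 * real n * (real d + 1)" using nR dR by simp
  show e0: "0 < e" unfolding e_def using pos by simp
  have ne: "real n * (real d + 1) * e = 1/2" unfolding e_def using pos by (simp add: field_simps)
  have d3: "real d + 1 \<ge> 3" using dR by simp
  have "2 * 3 \<le> real n * (real d + 1)" using mult_mono[OF nR d3] nR by simp
  then have "6 * e \<le> real n * (real d + 1) * e" using mult_right_mono e0 by (simp add: less_imp_le)
  then have e6: "e \<le> 1/12" using ne by linarith
  show eR: "e < R" using e6 R by simp
  have p0: "0 < e^d" using e0 by simp
  have pe: "e^d \<le> e" using power_decreasing[of 1 d e] d2 e0 e6 by simp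
  have nee: "real n * e + real n * real d * e = 1/2" using ne by (simp add: algebra_simps)
  have de0: "0 < real d * e" using e0 dR by simp
  have ne0: "0 \<le> real n * e" using e0 by simp
  have nde0: "0 \<le> real n * real d * e" using e0 by simp
  have nde: "real n * (real d * e) \<le> 1/2" using nee ne0 by (simp add: mult.assoc)
  have "1 * (real d * e) \<le> real n * (real d * e)" using nR de0 by (intro mult_right_mono) auto
  then have de: "real d * e < 1" using nde by linarith
  have ne2: "real n * e \<le> 1/2" using nee nde0 by linarith
  have b1: "e^d < (1 + e^d) / real n"
  proof -
    have "e^d * (real n - 1) \<le> e * (real n - 1)" using pe nR by (intro mult_right_mono) auto
    then have "e^d * (real n - 1) \<le> e * real n" using e0 by (simp add: algebra_simps)
    then have "e^d * real n < 1 + e^d" using ne2 by (simp add: algebra_simps)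
    then show ?thesis using nR by (simp add: field_simps)
  qed
  have b3: "1 / real n < (1 + e^d) / real n" using p0 nR by (simp add: divide_strict_right_mono)
  have b2: "(1 + e^d - (1 - real d * e) / (real n - 1)) / (real n - 1) < (1 + e^d) / real n"
  proof -
    have n1: "real n - 1 > 0" using nR by simp
    have A: "(real n - 1) * (1 + e^d) < real n * (1 - real d * e)"
    proof -
      have "(real n - 1) * (1 + e^d) \<le> (real n - 1) * (1 + e)" using pe n1 by simp
      also have "\<dots> = real n - 1 + real n * e - e" by (simp add: algebra_simps)
      also have "\<dots> < real n - real n * (real d * e)" using nee e0 by (simp add: algebra_simps)
      finally show ?thesis by (simp add: algebra_simps)
    qed
    let ?c = "(1 - real d * e) / (real n - 1)"
    have "real n * ?c = real n * (1 - real d * e) / (real n - 1)" by simp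
    then have "1 + e^d < real n * ?c" using A n1 by (simp add: field_simps)
    then have "real n * (1 + e^d - ?c) < (real n - 1) * (1 + e^d)" by (simp add: algebra_simps)
    then have "real n * (1 + e^d - ?c) / (real n * (real n - 1)) < (real n - 1) * (1 + e^d) / (real n * (real n - 1))"
      using n1 nR by (intro divide_strict_right_mono) auto
    moreover have "real n * (1 + e^d - ?c) / (real n * (real n - 1)) = (1 + e^d - ?c) / (real n - 1)"
      using nR by simp
    moreover have "(real n - 1) * (1 + e^d) / (real n * (real n - 1)) = (1 + e^d) / real n"
      using n1 by simp
    ultimately show ?thesis by simp
  qed
  show "max (e^d) (max ((1 + e^d - (1 - real d * e) / (real n - 1)) / (real n - 1)) (1 / real n)) < (1 + e^d) / real n"
    using b1 b2 b3 by simp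
  fix m :: real assume m1: "1 \<le> m" and mb: "m \<le> (real n - 1) powr (1 / real d)"
  show "(1 - real d * e) / (real n - 1) \<le> ((R - e) / (m * R)) ^ d"
    using mpart[OF nR dR R e0 eR de m1 mb] .
qed



theorem mainTheorem15:
  fixes R :: real and n :: nat
  assumes "CARD('d::finite) \<ge> 2" and "n \<ge> 2" and "R \<ge> 1"
  shows "\<exists>C :: (real^'d) set. C \<in> sets borel \<and> fat (R + 1) C \<and>
    (\<forall>m'::real. 1 \<le> m' \<and> m' \<le> (real n - 1) powr (1 / real CARD('d)) \<longrightarrow>
       PropEF C n (fat_pieces (m' * R)) \<le> Prop C n (fat_pieces (m' * R)) \<and>
       Prop C n (fat_pieces (m' * R)) < ereal (1 / real n))"
proof -
  define e :: real where "e = 1 / (2 * real n * (real CARD('d) + 1))"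
  define K :: "(real^'d) set" where "K = cbox (0 *\<^sub>R One) (1 *\<^sub>R One)"
  define P :: "(real^'d) set" where "P = cbox ((R+1-e) *\<^sub>R One) ((R+1) *\<^sub>R One)"
  define T where "T = 1 + e ^ CARD('d)"
  define c0 where "c0 = (1 - real CARD('d) * e) / (real n - 1)"
  define W where "W = max (e ^ CARD('d)) (max ((T - c0) / (real n - 1)) (1 / real n))"
  note num = numerics[OF assms(2) assms(1) assms(3) e_def]
  have e0: "0 < e" using num(1) .
  have eR: "e < R" using num(2) .
  have WT: "W < T / real n" using num(3) unfolding W_def T_def c0_def .
  have nR: "real n \<ge> 2" using assms by simp
  have T0: "0 < T" unfolding T_def using e0 by (simp add: add_pos_nonneg)
  have memK: "x \<in> K \<longleftrightarrow> (\<forall>i. 0 \<le> x$i \<and> x$i \<le> 1)" for x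
    unfolding K_def mem_box_cart oneR by simp
  have memP: "x \<in> P \<longleftrightarrow> (\<forall>i. R+1-e \<le> x$i \<and> x$i \<le> R+1)" for x
    unfolding P_def mem_box_cart oneR by simp
  have KL: "K \<in> lmeasurable" "P \<in> lmeasurable" unfolding K_def P_def by auto
  have CL: "K \<union> P \<in> lmeasurable"
    using KL by (intro bounded_set_imp_lmeasurable) (auto simp: K_def P_def)
  have disj: "K \<inter> P = {}"
  proof (rule ccontr)
    assume "K \<inter> P \<noteq> {}"
    then obtain x where "x \<in> K" "x \<in> P" by blast
    then have "x $ undefined \<le> 1" "R+1-e \<le> x $ undefined" using memK memP by auto
    then show False using eR by simp
  qed
  have "measure lebesgue K = (1 - 0)^CARD('d)" unfolding K_def by (rule cbox_const_measure) simp
  then have mK: "measure lebesgue K = 1" by simp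
  have "measure lebesgue P = (R + 1 - (R+1-e))^CARD('d)" unfolding P_def by (rule cbox_const_measure) (use e0 in simp)
  then have mP: "measure lebesgue P = e^CARD('d)" by simp
  have mC: "measure lebesgue (K \<union> P) = T"
  proof -
    have "emeasure lebesgue K \<noteq> \<infinity>" "emeasure lebesgue P \<noteq> \<infinity>"
      unfolding infinity_ennreal_def using KL fmeasurableD2 by blast+
    then show ?thesis unfolding T_def using measure_Union[of lebesgue K P] KL disj mK mP by (auto dest: fmeasurableD)
  qed
  define v0 :: "nat \<Rightarrow> real^'d \<Rightarrow> real" where "v0 = (\<lambda>i x. 1)"
  have vC: "valm (v0 i) (K \<union> P) = T" for i unfolding v0_def using valm_one[OF CL] mC by simp
  have vd: "value_density (K \<union> P) (v0 i)" for i
  proof -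
    have "emeasure lebesgue (K \<union> P) \<noteq> \<infinity>"
      unfolding infinity_ennreal_def using CL fmeasurableD2 by blast
    then have "set_integrable lebesgue (K \<union> P) (v0 i)"
      unfolding set_integrable_def v0_def using CL
      by (simp add: integrable_real_indicator less_top fmeasurableD)
    moreover have "0 < (LINT x:(K \<union> P)|lebesgue. v0 i x)" using vC T0 unfolding valm_def by simp
    ultimately show ?thesis unfolding value_density_def v0_def by auto
  qed
  show ?thesis
  proof (intro exI[of _ "K \<union> P"] conjI allI impI)
    show "K \<union> P \<in> sets borel" unfolding K_def P_def by simp
    have h1: "cube (\<lambda>x. x) 0 1 \<subseteq> K \<union> P" unfolding cube_def K_def by auto
    have h2: "K \<union> P \<subseteq> cube (\<lambda>x. x) 0 (R + 1)"
    proof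
      fix x assume "x \<in> K \<union> P"
      then have "\<forall>i. 0 \<le> x$i \<and> x$i \<le> R + 1"
      proof (elim UnE)
        assume "x \<in> K" then have k: "\<forall>i. 0 \<le> x$i \<and> x$i \<le> 1" using memK by blast
        show ?thesis
        proof
          fix i show "0 \<le> x$i \<and> x$i \<le> R + 1" using k[rule_format, of i] assms(3) by linarith
        qed
      next
        assume "x \<in> P" then have "\<forall>i. R+1-e \<le> x$i \<and> x$i \<le> R+1" using memP by blast
        then show ?thesis
        proof (intro allI)
          fix i assume k: "\<forall>i. R+1-e \<le> x$i \<and> x$i \<le> R+1"
          show "0 \<le> x$i \<and> x$i \<le> R + 1" using k[rule_format, of i] eR assms(3) by linarith
        qed
      qed
      then show "x \<in> cube (\<lambda>x. x) 0 (R + 1)" unfolding cube_def by (simp add: mem_box_cart oneR)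
    qed
    show "fat (R + 1) (K \<union> P)"
      unfolding fat_def using h1 h2 assms(3)
      by (intro exI[of _ "\<lambda>x. x"] exI[of _ 0] exI[of _ 1] exI[of _ 0] exI[of _ "R + 1"]) auto
    fix m' :: real
    assume m: "1 \<le> m' \<and> m' \<le> (real n - 1) powr (1 / real CARD('d))"
    show "PropEF (K \<union> P) n (fat_pieces (m' * R)) \<le> Prop (K \<union> P) n (fat_pieces (m' * R))"
      by (rule propEF_le)
    have M0: "0 < m' * R" using m assms by simp
    have Mb: "c0 \<le> ((R - e) / (m' * R)) ^ CARD('d)" unfolding c0_def using num(4) m by auto
    have bound: "prop_ratio (K \<union> P) n v0 X \<le> W / T" if al: "allocation (K \<union> P) n (fat_pieces (m' * R)) X" for X
    proof -
      obtain i where i: "i < n" "measure lebesgue (X i) \<le> W"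
        using key[OF assms(2) al K_def P_def e0 eR M0 Mb] unfolding W_def T_def by blast
      have "X i \<in> sets borel" "X i \<subseteq> K \<union> P" using al i(1) unfolding allocation_def fat_pieces_def by auto
      then have XL: "X i \<in> lmeasurable" using fmeasurableI2[OF CL] borel_lebesgue by blast
      have "prop_ratio (K \<union> P) n v0 X \<le> valm (v0 i) (X i) / valm (v0 i) (K \<union> P)"
        unfolding prop_ratio_def using i(1) by (intro Min_le) auto
      also have "\<dots> = measure lebesgue (X i) / T" using vC valm_one[OF XL] unfolding v0_def by simp
      also have "\<dots> \<le> W / T" using i(2) T0 by (simp add: divide_right_mono)
      finally show ?thesis .
    qed
    have "Prop (K \<union> P) n (fat_pieces (m' * R)) \<le> Sup {ereal (prop_ratio (K \<union> P) n v0 X) | X. allocation (K \<union> P) n (fat_pieces (m' * R)) X}"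
      unfolding Prop_def using vd by (intro Inf_lower) blast
    also have "\<dots> \<le> ereal (W / T)"
      using bound by (intro Sup_least) auto
    also have "\<dots> < ereal (1 / real n)"
    proof -
      have "W / T < 1 / real n" using WT T0 nR by (simp add: divide_less_eq field_simps)
      then show ?thesis by simp
    qed
    finally show "Prop (K \<union> P) n (fat_pieces (m' * R)) < ereal (1 / real n)" .
  qed
qed

end
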